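(* Let $\mathrm{M}$ be a (loopless) matroid of rank $d+1$. For nested index sets $J\subseteq J'\subseteq[d]$, \[ \frac{N_J(\mathrm{M})}{U_J}\le\frac{N_{J'}(\mathrm{M})}{U_{J'}}. \]
   Context: For $J=\{j_1<\cdots<j_m\}\subseteq[d]$, $N_J(\mathrm{M})$ is the number of chains of flats $G_1\subsetneq\cdots\subsetneq G_m$ of $\mathrm{M}$ with $\operatorname{rk}(G_\ell)=j_\ell$ (with $N_\varnothing=1$). $U_J:=N_J(\mathrm{U}_{d+1})$ for the Boolean matroid $\mathrm{U}_{d+1}$ on $d+1$ elements; explicitly $U_J=\frac{n_{m+1}(d+1)!}{\prod_{i=1}^{m+1}n_i!}$, where $n_1=j_1$, $n_\ell=j_\ell-j_{\ell-1}$ ($2\le\ell\le m$), $n_{m+1}=d+2-j_m$ (and $n_1=d+2$ if $J=\varnothing$). *)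

theory Defs
  imports Complex_Main
begin

definition matroid :: "'a set \<Rightarrow> ('a set \<Rightarrow> bool) \<Rightarrow> bool" where
  "matroid E indep \<longleftrightarrow> finite E
     \<and> (\<forall>I. indep I \<longrightarrow> I \<subseteq> E)
     \<and> indep {}
     \<and> (\<forall>I J. indep J \<and> I \<subseteq> J \<longrightarrow> indep I)
     \<and> (\<forall>I J. indep I \<and> indep J \<and> card I < card J \<longrightarrow> (\<exists>x\<in>J - I. indep (insert x I)))"

definition loopless :: "'a set \<Rightarrow> ('a set \<Rightarrow> bool) \<Rightarrow> bool" where
  "loopless E indep \<longleftrightarrow> (\<forall>x\<in>E. indep {x})"

definition mrank :: "('a set \<Rightarrow> bool) \<Rightarrow> 'a set \<Rightarrow> nat" where
  "mrank indep X = Max {card I | I. I \<subseteq> X \<and> indep I}"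

definition flat :: "'a set \<Rightarrow> ('a set \<Rightarrow> bool) \<Rightarrow> 'a set \<Rightarrow> bool" where
  "flat E indep F \<longleftrightarrow> F \<subseteq> E \<and> (\<forall>x\<in>E - F. mrank indep (insert x F) > mrank indep F)"

text \<open>N_J(M): number of chains of flats G_{j_1} \<subset> ... \<subset> G_{j_m} with rk(G_j) = j,
  encoded as functions on J (extended by {} outside J).\<close>
definition chains_of_flats :: "'a set \<Rightarrow> ('a set \<Rightarrow> bool) \<Rightarrow> nat set \<Rightarrow> (nat \<Rightarrow> 'a set) set" where
  "chains_of_flats E indep J =
     {G. (\<forall>j\<in>J. flat E indep (G j) \<and> mrank indep (G j) = j)
       \<and> (\<forall>j\<in>J. \<forall>j'\<in>J. j < j' \<longrightarrow> G j \<subset> G j')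
       \<and> (\<forall>j. j \<notin> J \<longrightarrow> G j = {})}"

definition N_flag :: "'a set \<Rightarrow> ('a set \<Rightarrow> bool) \<Rightarrow> nat set \<Rightarrow> nat" where
  "N_flag E indep J = card (chains_of_flats E indep J)"

definition U_flag :: "nat \<Rightarrow> nat set \<Rightarrow> nat" where
  "U_flag d J = N_flag {0..d} (\<lambda>I. I \<subseteq> {0..d}) J"

end

theory Submission
  imports Defs
begin

definition lo_idx :: "nat set \<Rightarrow> nat \<Rightarrow> nat" where
  "lo_idx J k = (if \<exists>j\<in>J. j < k then Max {j\<in>J. j < k} else 0)"
definition hi_idx :: "nat set \<Rightarrow> nat \<Rightarrow> nat \<Rightarrow> nat" where
  "hi_idx J k n = (if \<exists>j\<in>J. k < j then Min {j\<in>J. k < j} else n)"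

lemma lo_idx_props:
  assumes "finite J" "\<exists>j\<in>J. j < k"
  shows "lo_idx J k \<in> J" "lo_idx J k < k" "\<And>j. j \<in> J \<Longrightarrow> j < k \<Longrightarrow> j \<le> lo_idx J k"
proof -
  have f: "finite {j\<in>J. j < k}" "{j\<in>J. j < k} \<noteq> {}" using assms by auto
  have "Max {j\<in>J. j < k} \<in> {j\<in>J. j < k}" using Max_in[OF f] .
  then show "lo_idx J k \<in> J" "lo_idx J k < k" using assms(2) by (auto simp: lo_idx_def)
  show "\<And>j. j \<in> J \<Longrightarrow> j < k \<Longrightarrow> j \<le> lo_idx J k" using assms(2) f(1) by (auto simp: lo_idx_def intro: Max_ge)
qed

lemma hi_idx_props:
  assumes "finite J" "\<exists>j\<in>J. k < j"
  shows "hi_idx J k n \<in> J" "k < hi_idx J k n" "\<And>j. j \<in> J \<Longrightarrow> k < j \<Longrightarrow> hi_idx J k n \<le> j"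
proof -
  have f: "finite {j\<in>J. k < j}" "{j\<in>J. k < j} \<noteq> {}" using assms by auto
  have "Min {j\<in>J. k < j} \<in> {j\<in>J. k < j}" using Min_in[OF f] .
  then show "hi_idx J k n \<in> J" "k < hi_idx J k n" using assms(2) by (auto simp: hi_idx_def)
  show "\<And>j. j \<in> J \<Longrightarrow> k < j \<Longrightarrow> hi_idx J k n \<le> j" using assms(2) f(1) by (auto simp: hi_idx_def intro: Min_le)
qed

lemma lo_idx_less: "finite J \<Longrightarrow> 0 < k \<Longrightarrow> lo_idx J k < k"
  using lo_idx_props(2)[of J k] by (auto simp: lo_idx_def)
lemma hi_idx_gt: "finite J \<Longrightarrow> k < n \<Longrightarrow> k < hi_idx J k n"
  using hi_idx_props(2)[of J k n] by (auto simp: hi_idx_def)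

locale mat =
  fixes E :: "'a set" and indep :: "'a set \<Rightarrow> bool"
  assumes M: "matroid E indep"
begin

lemma finE: "finite E" using M by (simp add: matroid_def)
lemma indep_sub: "indep I \<Longrightarrow> I \<subseteq> E" using M by (simp add: matroid_def)
lemma indep_empty: "indep {}" using M by (simp add: matroid_def)
lemma indep_mono: "indep J \<Longrightarrow> I \<subseteq> J \<Longrightarrow> indep I" using M unfolding matroid_def by blast
lemma aug: "indep I \<Longrightarrow> indep J \<Longrightarrow> card I < card J \<Longrightarrow> \<exists>x\<in>J - I. indep (insert x I)"
  using M unfolding matroid_def by blast
lemma indep_fin: "indep I \<Longrightarrow> finite I" using indep_sub finE finite_subset by blast

lemma rset_fin: "finite {card I | I. I \<subseteq> X \<and> indep I}"
proof -
  have "{card I | I. I \<subseteq> X \<and> indep I} \<subseteq> {0..card E}"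
    using indep_sub card_mono[OF finE] by fastforce
  then show ?thesis using finite_subset by blast
qed
lemma rset_ne: "{card I | I. I \<subseteq> X \<and> indep I} \<noteq> {}" using indep_empty by auto

lemma rank_ge: "I \<subseteq> X \<Longrightarrow> indep I \<Longrightarrow> card I \<le> mrank indep X"
  unfolding mrank_def using rset_fin by (auto intro: Max_ge)
lemma rank_ex: "\<exists>I. I \<subseteq> X \<and> indep I \<and> card I = mrank indep X"
proof -
  have "mrank indep X \<in> {card I | I. I \<subseteq> X \<and> indep I}"
    unfolding mrank_def using Max_in[OF rset_fin rset_ne] .
  then show ?thesis by auto
qed
lemma rank_empty: "mrank indep {} = 0"
  using rank_ex[of "{}"] by auto

lemma extend:
  assumes "indep T" "T \<subseteq> X"
  shows "\<exists>T'. T \<subseteq> T' \<and> T' \<subseteq> X \<and> indep T' \<and> card T' = mrank indep X"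
  using assms
proof (induction "mrank indep X - card T" arbitrary: T rule: less_induct)
  case less
  have le: "card T \<le> mrank indep X" using rank_ge[OF less.prems(2,1)] .
  show ?case
  proof (cases "card T = mrank indep X")
    case True then show ?thesis using less.prems by blast
  next
    case False
    obtain I0 where I0: "I0 \<subseteq> X" "indep I0" "card I0 = mrank indep X" using rank_ex by blast
    have "card T < card I0" using le False I0 by simp
    then obtain y where y: "y \<in> I0 - T" "indep (insert y T)" using aug[OF less.prems(1) I0(2)] by blast
    have fT: "finite T" using indep_fin[OF less.prems(1)] .
    have c: "card (insert y T) = card T + 1" using y fT by simp
    have "mrank indep X - card (insert y T) < mrank indep X - card T" using c le False by simp
    moreover have "insert y T \<subseteq> X" using y I0(1) less.prems(2) by blast
    ultimately obtain T' where "insert y T \<subseteq> T'" "T' \<subseteq> X" "indep T'" "card T' = mrank indep X"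
      using less.hyps[OF _ y(2)] by blast
    then show ?thesis by blast
  qed
qed

definition cl :: "'a set \<Rightarrow> 'a set" where
  "cl T = {x\<in>E. x \<in> T \<or> \<not> indep (insert x T)}"

lemma cl_sup: "indep T \<Longrightarrow> T \<subseteq> cl T" using indep_sub[of T] unfolding cl_def by blast
lemma cl_sub: "cl T \<subseteq> E" unfolding cl_def by blast

lemma cl_rank: assumes "indep T" shows "mrank indep (cl T) = card T"
proof -
  have "card T \<le> mrank indep (cl T)" using rank_ge[OF cl_sup[OF assms] assms] .
  moreover have "\<not> card T < mrank indep (cl T)"
  proof
    assume lt: "card T < mrank indep (cl T)"
    obtain I where I: "I \<subseteq> cl T" "indep I" "card I = mrank indep (cl T)" using rank_ex by blast
    have "card T < card I" using lt I(3) by simp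
    then obtain y where y: "y \<in> I - T" "indep (insert y T)" using aug[OF assms I(2)] by blast
    then show False using I unfolding cl_def by blast
  qed
  ultimately show ?thesis by simp
qed

lemma cl_flat: assumes "indep T" shows "flat E indep (cl T)"
  unfolding flat_def
proof (intro conjI ballI)
  show "cl T \<subseteq> E" by (rule cl_sub)
  fix x assume x: "x \<in> E - cl T"
  then have nx: "x \<notin> T" and ix: "indep (insert x T)" unfolding cl_def by auto
  have sub: "insert x T \<subseteq> insert x (cl T)" using cl_sup[OF assms] by blast
  have "card (insert x T) \<le> mrank indep (insert x (cl T))"
    using rank_ge[OF sub ix] .
  moreover have "card (insert x T) = card T + 1" using nx indep_fin[OF assms] by simp
  ultimately show "mrank indep (cl T) < mrank indep (insert x (cl T))" using cl_rank[OF assms] by simp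
qed

lemma flat_closed:
  assumes B: "flat E indep B" and T: "indep T" "T \<subseteq> B" and x: "x \<in> E" "\<not> indep (insert x T)"
  shows "x \<in> B"
proof (rule ccontr)
  assume nx: "x \<notin> B"
  have gt: "mrank indep B < mrank indep (insert x B)" using B x nx unfolding flat_def by blast
  obtain J where J: "J \<subseteq> insert x B" "indep J" "card J = mrank indep (insert x B)" using rank_ex by blast
  obtain T' where T': "T \<subseteq> T'" "T' \<subseteq> B" "indep T'" "card T' = mrank indep B" using extend[OF T] by blast
  have lt: "card T' < card J" using gt J(3) T'(4) by simp
  obtain y where y: "y \<in> J - T'" "indep (insert y T')" using aug[OF T'(3) J(2) lt] by blast
  show False
  proof (cases "y = x")
    case True
    have "insert x T \<subseteq> insert y T'" using True T'(1) by blast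
    then have "indep (insert x T)" using indep_mono[OF y(2)] by blast
    then show False using x by blast
  next
    case False
    then have "y \<in> B" using y J(1) by blast
    then have sub: "insert y T' \<subseteq> B" using T'(2) by blast
    have "card (insert y T') \<le> mrank indep B" using rank_ge[OF sub y(2)] .
    moreover have "card (insert y T') = card T' + 1" using y indep_fin[OF T'(3)] by simp
    ultimately show False using T'(4) by simp
  qed
qed

lemma count_lower:
  assumes AB: "A \<subseteq> B" and rA: "mrank indep A = a" and fB: "flat E indep B" and rB: "mrank indep B = b"
    and ak: "a \<le> k" and kb: "k \<le> b"
  shows "(b - a) choose (k - a) \<le> card {F. flat E indep F \<and> mrank indep F = k \<and> A \<subseteq> F \<and> F \<subseteq> B}"
proof -
  obtain I where I: "I \<subseteq> A" "indep I" "card I = a" using rank_ex[of A] rA by blast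
  have IB: "I \<subseteq> B" using I(1) AB by (rule subset_trans)
  obtain T' where T': "I \<subseteq> T'" "T' \<subseteq> B" "indep T'" "card T' = b"
    using extend[OF I(2) IB] rB by blast
  define K where "K = T' - I"
  have fT': "finite T'" using indep_fin[OF T'(3)] .
  have fI: "finite I" using indep_fin[OF I(2)] .
  have cK: "card K = b - a" unfolding K_def using card_Diff_subset[OF fI T'(1)] T'(4) I(3) by simp
  have fK: "finite K" unfolding K_def using fT' by simp
  define Ss where "Ss = {S. S \<subseteq> K \<and> card S = k - a}"
  have cSs: "card Ss = (b - a) choose (k - a)" unfolding Ss_def using n_subsets[OF fK] cK by simp
  define Tgt where "Tgt = {F. flat E indep F \<and> mrank indep F = k \<and> A \<subseteq> F \<and> F \<subseteq> B}"
  have BE: "B \<subseteq> E" using fB unfolding flat_def by blast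
  have finB: "finite B" using finite_subset[OF BE finE] .
  have "Tgt \<subseteq> Pow B" by (auto simp: Tgt_def)
  then have fTgt: "finite Tgt" using finB by (simp add: finite_subset)
  have indIS: "indep (I \<union> S)" if "S \<in> Ss" for S
  proof -
    have "I \<union> S \<subseteq> T'" using that T'(1) unfolding Ss_def K_def by blast
    then show ?thesis using indep_mono[OF T'(3)] by blast
  qed
  have img: "cl (I \<union> S) \<in> Tgt" if S: "S \<in> Ss" for S
  proof -
    have ind: "indep (I \<union> S)" using indIS[OF S] .
    have disj: "I \<inter> S = {}" using S unfolding Ss_def K_def by blast
    have SK: "S \<subseteq> K" and cS: "card S = k - a" using S unfolding Ss_def by auto
    have fS: "finite S" using finite_subset[OF SK fK] .
    have cIS: "card (I \<union> S) = k" using card_Un_disjoint[OF fI fS disj] I(3) cS ak by simp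
    have A: "A \<subseteq> cl (I \<union> S)"
    proof
      fix x assume xA: "x \<in> A"
      have xE: "x \<in> E" using xA AB BE by blast
      show "x \<in> cl (I \<union> S)"
      proof (cases "x \<in> I \<union> S")
        case True then show ?thesis using xE unfolding cl_def by blast
      next
        case False
        have "\<not> indep (insert x I)"
        proof
          assume ixI: "indep (insert x I)"
          have sub: "insert x I \<subseteq> A" using xA I(1) by blast
          have "card (insert x I) \<le> a" using rank_ge[OF sub ixI] rA by simp
          moreover have "card (insert x I) = a + 1" using False fI I(3) by simp
          ultimately show False by simp
        qed
        moreover have "insert x I \<subseteq> insert x (I \<union> S)" by blast
        ultimately have "\<not> indep (insert x (I \<union> S))" using indep_mono[of "insert x (I \<union> S)" "insert x I"] by blast
        then show ?thesis using xE unfolding cl_def by blast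
      qed
    qed
    have ISB: "I \<union> S \<subseteq> B" using S T'(1,2) unfolding Ss_def K_def by blast
    have Bc: "cl (I \<union> S) \<subseteq> B"
    proof
      fix x assume x: "x \<in> cl (I \<union> S)"
      then have xE: "x \<in> E" and xd: "x \<in> I \<union> S \<or> \<not> indep (insert x (I \<union> S))" unfolding cl_def by auto
      show "x \<in> B"
      proof (cases "x \<in> I \<union> S")
        case True then show ?thesis using ISB by blast
      next
        case False
        then have "\<not> indep (insert x (I \<union> S))" using xd by blast
        then show ?thesis using flat_closed[OF fB ind ISB xE] by blast
      qed
    qed
    have rk: "mrank indep (cl (I \<union> S)) = k" using cl_rank[OF ind] cIS by (rule trans)
    have "flat E indep (cl (I \<union> S)) \<and> mrank indep (cl (I \<union> S)) = k \<and> A \<subseteq> cl (I \<union> S) \<and> cl (I \<union> S) \<subseteq> B"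
      using cl_flat[OF ind] rk A Bc by (intro conjI)
    then show ?thesis unfolding Tgt_def by (rule CollectI)
  qed
  have key: "cl (I \<union> S) \<inter> K = S" if S: "S \<in> Ss" for S
  proof
    show "S \<subseteq> cl (I \<union> S) \<inter> K" using cl_sup[OF indIS[OF S]] S unfolding Ss_def by blast
    show "cl (I \<union> S) \<inter> K \<subseteq> S"
    proof
      fix x assume x: "x \<in> cl (I \<union> S) \<inter> K"
      show "x \<in> S"
      proof (rule ccontr)
        assume "x \<notin> S"
        then have n: "x \<notin> I \<union> S" using x unfolding K_def by blast
        have "insert x (I \<union> S) \<subseteq> T'" using x S T'(1) unfolding K_def Ss_def by blast
        then have "indep (insert x (I \<union> S))" using indep_mono[OF T'(3)] by blast
        then show False using x n unfolding cl_def by blast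
      qed
    qed
  qed
  have inj: "inj_on (\<lambda>S. cl (I \<union> S)) Ss"
  proof (rule inj_onI)
    fix S1 S2 assume h1: "S1 \<in> Ss" and h2: "S2 \<in> Ss" and h3: "cl (I \<union> S1) = cl (I \<union> S2)"
    have "S1 = cl (I \<union> S1) \<inter> K" using key[OF h1] by (rule sym)
    also have "\<dots> = cl (I \<union> S2) \<inter> K" using h3 by (rule arg_cong)
    also have "\<dots> = S2" using key[OF h2] .
    finally show "S1 = S2" .
  qed
  have sub: "(\<lambda>S. cl (I \<union> S)) ` Ss \<subseteq> Tgt" using img by blast
  have "card Ss \<le> card Tgt" by (rule card_inj_on_le[OF inj sub fTgt])
  then show ?thesis unfolding cSs Tgt_def .
qed


lemma flat_subE: "flat E indep F \<Longrightarrow> F \<subseteq> E" by (simp add: flat_def)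
lemma flat_E: "flat E indep E" by (simp add: flat_def)

lemma chainD:
  assumes "H \<in> chains_of_flats E indep J"
  shows "\<And>j. j \<in> J \<Longrightarrow> flat E indep (H j)" "\<And>j. j \<in> J \<Longrightarrow> mrank indep (H j) = j"
    "\<And>j j'. j \<in> J \<Longrightarrow> j' \<in> J \<Longrightarrow> j < j' \<Longrightarrow> H j \<subset> H j'" "\<And>j. j \<notin> J \<Longrightarrow> H j = {}"
  using assms unfolding chains_of_flats_def by auto

lemma chainI:
  assumes "\<And>j. j \<in> J \<Longrightarrow> flat E indep (H j)" "\<And>j. j \<in> J \<Longrightarrow> mrank indep (H j) = j"
    "\<And>j j'. j \<in> J \<Longrightarrow> j' \<in> J \<Longrightarrow> j < j' \<Longrightarrow> H j \<subset> H j'" "\<And>j. j \<notin> J \<Longrightarrow> H j = {}"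
  shows "H \<in> chains_of_flats E indep J"
  using assms unfolding chains_of_flats_def by auto

lemma chain_le:
  assumes H: "H \<in> chains_of_flats E indep J" and "j \<in> J" "j' \<in> J" "j \<le> j'"
  shows "H j \<subseteq> H j'"
proof (cases "j = j'")
  case True then show ?thesis by simp
next
  case False then have "j < j'" using assms(4) by simp
  then show ?thesis using chainD(3)[OF H assms(2,3)] by blast
qed

lemma chains_fin: assumes "finite J" shows "finite (chains_of_flats E indep J)"
proof -
  have "chains_of_flats E indep J \<subseteq> {f. \<forall>x. (x \<in> J \<longrightarrow> f x \<in> Pow E) \<and> (x \<notin> J \<longrightarrow> f x = {})}"
  proof
    fix H assume H: "H \<in> chains_of_flats E indep J"
    show "H \<in> {f. \<forall>x. (x \<in> J \<longrightarrow> f x \<in> Pow E) \<and> (x \<notin> J \<longrightarrow> f x = {})}"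
      using chainD(1)[OF H] chainD(4)[OF H] flat_subE by blast
  qed
  moreover have "finite {f. \<forall>x. (x \<in> J \<longrightarrow> f x \<in> Pow E) \<and> (x \<notin> J \<longrightarrow> f x = ({}::'a set))}"
    by (rule finite_set_of_finite_funs) (use assms finE in auto)
  ultimately show ?thesis by (rule finite_subset)
qed

definition loS :: "nat set \<Rightarrow> nat \<Rightarrow> (nat \<Rightarrow> 'a set) \<Rightarrow> 'a set" where
  "loS J k H = (if \<exists>j\<in>J. j < k then H (lo_idx J k) else {})"
definition hiS :: "nat set \<Rightarrow> nat \<Rightarrow> (nat \<Rightarrow> 'a set) \<Rightarrow> 'a set" where
  "hiS J k H = (if \<exists>j\<in>J. k < j then H (hi_idx J k 0) else E)"
definition TT :: "nat set \<Rightarrow> nat \<Rightarrow> (nat \<Rightarrow> 'a set) \<Rightarrow> 'a set set" where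
  "TT J k H = {F. flat E indep F \<and> mrank indep F = k \<and> loS J k H \<subseteq> F \<and> F \<subseteq> hiS J k H}"

lemma lo_sub:
  assumes fJ: "finite J" and H: "H \<in> chains_of_flats E indep J" and j: "j \<in> J" "j < k"
  shows "H j \<subseteq> loS J k H"
proof -
  have ex: "\<exists>j\<in>J. j < k" using j by blast
  have "H j \<subseteq> H (lo_idx J k)"
    using chain_le[OF H j(1) lo_idx_props(1)[OF fJ ex] lo_idx_props(3)[OF fJ ex j]] .
  then show ?thesis using ex by (simp add: loS_def)
qed

lemma hi_sub:
  assumes fJ: "finite J" and H: "H \<in> chains_of_flats E indep J" and j: "j \<in> J" "k < j"
  shows "hiS J k H \<subseteq> H j"
proof -
  have ex: "\<exists>j\<in>J. k < j" using j by blast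
  have "H (hi_idx J k 0) \<subseteq> H j"
    using chain_le[OF H hi_idx_props(1)[OF fJ ex] j(1) hi_idx_props(3)[OF fJ ex j]] .
  then show ?thesis using ex by (simp add: hiS_def)
qed

lemma rank_lo:
  assumes fJ: "finite J" and H: "H \<in> chains_of_flats E indep J"
  shows "mrank indep (loS J k H) = lo_idx J k"
proof (cases "\<exists>j\<in>J. j < k")
  case True
  then show ?thesis using chainD(2)[OF H lo_idx_props(1)[OF fJ True]] by (simp add: loS_def)
next
  case False
  then show ?thesis using rank_empty by (simp add: loS_def lo_idx_def)
qed

lemma hi_idx_indep: "\<exists>j\<in>J. k < j \<Longrightarrow> hi_idx J k n = hi_idx J k m"
  by (simp add: hi_idx_def)

lemma rank_hi:
  assumes fJ: "finite J" and H: "H \<in> chains_of_flats E indep J" and rE: "mrank indep E = n"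
  shows "mrank indep (hiS J k H) = hi_idx J k n"
proof (cases "\<exists>j\<in>J. k < j")
  case True
  have "mrank indep (H (hi_idx J k 0)) = hi_idx J k 0"
    using chainD(2)[OF H hi_idx_props(1)[OF fJ True]] .
  then show ?thesis using True hi_idx_indep[OF True, of n 0] by (simp add: hiS_def)
next
  case False
  then show ?thesis using rE by (simp add: hiS_def hi_idx_def)
qed

lemma flat_hi:
  assumes fJ: "finite J" and H: "H \<in> chains_of_flats E indep J"
  shows "flat E indep (hiS J k H)"
proof (cases "\<exists>j\<in>J. k < j")
  case True
  then show ?thesis using chainD(1)[OF H hi_idx_props(1)[OF fJ True]] by (simp add: hiS_def)
next
  case False
  then show ?thesis using flat_E by (simp add: hiS_def)
qed

lemma lo_hi:
  assumes fJ: "finite J" and H: "H \<in> chains_of_flats E indep J"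
  shows "loS J k H \<subseteq> hiS J k H"
proof (cases "\<exists>j\<in>J. j < k")
  case True
  note a = lo_idx_props[OF fJ True]
  have "H (lo_idx J k) \<subseteq> hiS J k H"
  proof (cases "\<exists>j\<in>J. k < j")
    case True2: True
    have "H (lo_idx J k) \<subseteq> H (hi_idx J k 0)"
      using chain_le[OF H a(1) hi_idx_props(1)[OF fJ True2]] a(2) hi_idx_props(2)[OF fJ True2, of 0] by simp
    then show ?thesis using True2 by (simp add: hiS_def)
  next
    case False
    then show ?thesis using flat_subE[OF chainD(1)[OF H a(1)]] by (simp add: hiS_def)
  qed
  then show ?thesis using True by (simp add: loS_def)
next
  case False
  then show ?thesis by (simp add: loS_def)
qed

lemma card_ins:
  assumes fJ: "finite J" and kJ: "k \<notin> J"
  shows "card (chains_of_flats E indep (insert k J)) = (\<Sum>H\<in>chains_of_flats E indep J. card (TT J k H))"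
proof -
  let ?C = "chains_of_flats E indep J"
  let ?S = "Sigma ?C (TT J k)"
  define f where "f = (\<lambda>(H::nat \<Rightarrow> 'a set, F::'a set). H(k:=F))"
  have Hk: "H k = {}" if "H \<in> ?C" for H using chainD(4)[OF that kJ] .
  have inj: "inj_on f ?S"
  proof (rule inj_onI)
    fix p q assume p: "p \<in> ?S" and q: "q \<in> ?S" and e: "f p = f q"
    obtain H F where pHF: "p = (H, F)" and H: "H \<in> ?C" using p by blast
    obtain H' F' where qHF: "q = (H', F')" and H': "H' \<in> ?C" using q by blast
    have e2: "H(k:=F) = H'(k:=F')" using e pHF qHF by (simp add: f_def)
    have "F = F'" using fun_cong[OF e2, of k] by simp
    moreover have "H = H'"
    proof
      fix j show "H j = H' j"
      proof (cases "j = k")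
        case True then show ?thesis using Hk[OF H] Hk[OF H'] by simp
      next
        case False then show ?thesis using fun_cong[OF e2, of j] by simp
      qed
    qed
    ultimately show "p = q" using pHF qHF by simp
  qed
  have img: "f ` ?S = chains_of_flats E indep (insert k J)"
  proof
    show "f ` ?S \<subseteq> chains_of_flats E indep (insert k J)"
    proof
      fix G assume "G \<in> f ` ?S"
      then obtain H F where H: "H \<in> ?C" and F: "F \<in> TT J k H" and G: "G = H(k:=F)"
        by (auto simp: f_def)
      have Ff: "flat E indep F" and Fr: "mrank indep F = k" and Flo: "loS J k H \<subseteq> F"
        and Fhi: "F \<subseteq> hiS J k H" using F by (auto simp: TT_def)
      show "G \<in> chains_of_flats E indep (insert k J)"
      proof (rule chainI)
        fix j assume "j \<in> insert k J"
        then show "flat E indep (G j)" using Ff chainD(1)[OF H] G by (cases "j = k") auto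
      next
        fix j assume "j \<in> insert k J"
        then show "mrank indep (G j) = j" using Fr chainD(2)[OF H] G by (cases "j = k") auto
      next
        fix j assume "j \<notin> insert k J"
        then show "G j = {}" using chainD(4)[OF H] G by simp
      next
        fix j j' assume j: "j \<in> insert k J" and j': "j' \<in> insert k J" and lt: "j < j'"
        show "G j \<subset> G j'"
        proof (cases "j = k")
          case True
          then have j'J: "j' \<in> J" and kj': "k < j'" using j' lt by auto
          have "F \<subseteq> H j'" using Fhi hi_sub[OF fJ H j'J kj'] by blast
          moreover have "F \<noteq> H j'" using Fr chainD(2)[OF H j'J] kj' by auto
          ultimately show ?thesis using True G kj' by auto
        next
          case False
          then have jJ: "j \<in> J" using j by simp
          show ?thesis
          proof (cases "j' = k")
            case True
            then have jk: "j < k" using lt by simp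
            have "H j \<subseteq> F" using Flo lo_sub[OF fJ H jJ jk] by blast
            moreover have "H j \<noteq> F" using Fr chainD(2)[OF H jJ] jk by auto
            ultimately show ?thesis using True G jk by auto
          next
            case False2: False
            then have "j' \<in> J" using j' by simp
            then show ?thesis using chainD(3)[OF H jJ _ lt] G False False2 by simp
          qed
        qed
      qed
    qed
  next
    show "chains_of_flats E indep (insert k J) \<subseteq> f ` ?S"
    proof
      fix G assume G: "G \<in> chains_of_flats E indep (insert k J)"
      define H where "H = G(k:={})"
      have GH: "G = f (H, G k)" by (simp add: f_def H_def)
      have H: "H \<in> ?C"
      proof (rule chainI)
        fix j assume j: "j \<in> J"
        then have "j \<noteq> k" using kJ by blast
        then show "flat E indep (H j)" "mrank indep (H j) = j"
          using chainD(1,2)[OF G] j by (auto simp: H_def)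
      next
        fix j j' assume "j \<in> J" "j' \<in> J" "j < j'"
        then show "H j \<subset> H j'" using chainD(3)[OF G] kJ by (auto simp: H_def)
      next
        fix j assume "j \<notin> J"
        then show "H j = {}" using chainD(4)[OF G] by (auto simp: H_def)
      qed
      have "G k \<in> TT J k H"
      proof -
        have kk: "k \<in> insert k J" by simp
        have lo: "loS J k H \<subseteq> G k"
        proof (cases "\<exists>j\<in>J. j < k")
          case True
          note a = lo_idx_props[OF fJ True]
          have "G (lo_idx J k) \<subset> G k" using chainD(3)[OF G _ kk a(2)] a(1) by blast
          moreover have "H (lo_idx J k) = G (lo_idx J k)" using a(2) by (simp add: H_def)
          ultimately show ?thesis using True by (simp add: loS_def)
        next
          case False then show ?thesis by (simp add: loS_def)
        qed
        have hi: "G k \<subseteq> hiS J k H"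
        proof (cases "\<exists>j\<in>J. k < j")
          case True
          note b = hi_idx_props[OF fJ True, of 0]
          have "G k \<subset> G (hi_idx J k 0)" using chainD(3)[OF G kk _ b(2)] b(1) by blast
          moreover have "H (hi_idx J k 0) = G (hi_idx J k 0)" using b(2) by (simp add: H_def)
          ultimately show ?thesis using True by (simp add: hiS_def)
        next
          case False then show ?thesis using flat_subE[OF chainD(1)[OF G kk]] by (simp add: hiS_def)
        qed
        show ?thesis unfolding TT_def using chainD(1,2)[OF G kk] lo hi by blast
      qed
      then show "G \<in> f ` ?S" using GH H by blast
    qed
  qed
  have finT: "\<forall>H\<in>?C. finite (TT J k H)"
  proof
    fix H
    have "TT J k H \<subseteq> Pow E" using flat_subE by (auto simp: TT_def)
    then show "finite (TT J k H)" using finE by (simp add: finite_subset)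
  qed
  have "card (chains_of_flats E indep (insert k J)) = card ?S"
    using card_image[OF inj] img by simp
  also have "\<dots> = (\<Sum>H\<in>?C. card (TT J k H))"
    by (rule card_SigmaI[OF chains_fin[OF fJ] finT])
  finally show ?thesis .
qed


lemma step_lower:
  assumes fJ: "finite J" and kJ: "k \<notin> J" and k0: "0 < k" and kn: "k < n" and rE: "mrank indep E = n"
  shows "((hi_idx J k n - lo_idx J k) choose (k - lo_idx J k)) * card (chains_of_flats E indep J)
           \<le> card (chains_of_flats E indep (insert k J))"
proof -
  let ?c = "(hi_idx J k n - lo_idx J k) choose (k - lo_idx J k)"
  have "\<forall>H\<in>chains_of_flats E indep J. ?c \<le> card (TT J k H)"
  proof
    fix H assume H: "H \<in> chains_of_flats E indep J"
    have "?c \<le> card {F. flat E indep F \<and> mrank indep F = k \<and> loS J k H \<subseteq> F \<and> F \<subseteq> hiS J k H}"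
      by (rule count_lower[OF lo_hi[OF fJ H] rank_lo[OF fJ H] flat_hi[OF fJ H] rank_hi[OF fJ H rE]
            less_imp_le[OF lo_idx_less[OF fJ k0]] less_imp_le[OF hi_idx_gt[OF fJ kn]]])
    then show "?c \<le> card (TT J k H)" by (simp only: TT_def)
  qed
  then have "(\<Sum>H\<in>chains_of_flats E indep J. ?c) \<le> (\<Sum>H\<in>chains_of_flats E indep J. card (TT J k H))"
    by (intro sum_mono) blast
  then show ?thesis using card_ins[OF fJ kJ] by (simp add: mult.commute)
qed

lemma count_upper_card:
  assumes AB: "A \<subseteq> B" and fB: "finite B" and cA: "card A = a" and cB: "card B = b"
  shows "card {F. F \<subseteq> B \<and> A \<subseteq> F \<and> card F = k} \<le> (b - a) choose (k - a)"
proof -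
  have fA: "finite A" using finite_subset[OF AB fB] .
  let ?T = "{S. S \<subseteq> B - A \<and> card S = k - a}"
  have cT: "card ?T = (b - a) choose (k - a)"
    using n_subsets[of "B - A" "k - a"] fB card_Diff_subset[OF fA AB] cA cB by simp
  have inj: "inj_on (\<lambda>F. F - A) {F. F \<subseteq> B \<and> A \<subseteq> F \<and> card F = k}"
  proof (rule inj_onI)
    fix F1 F2 assume "F1 \<in> {F. F \<subseteq> B \<and> A \<subseteq> F \<and> card F = k}" "F2 \<in> {F. F \<subseteq> B \<and> A \<subseteq> F \<and> card F = k}"
      "F1 - A = F2 - A"
    then show "F1 = F2" by blast
  qed
  have sub: "(\<lambda>F. F - A) ` {F. F \<subseteq> B \<and> A \<subseteq> F \<and> card F = k} \<subseteq> ?T"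
  proof
    fix S assume "S \<in> (\<lambda>F. F - A) ` {F. F \<subseteq> B \<and> A \<subseteq> F \<and> card F = k}"
    then obtain F where F: "F \<subseteq> B" "A \<subseteq> F" "card F = k" and S: "S = F - A" by blast
    have "card S = k - a" using card_Diff_subset[OF fA F(2)] F(3) cA S by simp
    then show "S \<in> ?T" using F(1) S by blast
  qed
  have "finite ?T" using fB by simp
  then show ?thesis using card_inj_on_le[OF inj sub] cT by simp
qed

lemma step_upper:
  assumes rc: "\<And>X. X \<subseteq> E \<Longrightarrow> mrank indep X = card X"
    and fJ: "finite J" and kJ: "k \<notin> J" and rE: "mrank indep E = n"
  shows "card (chains_of_flats E indep (insert k J))
           \<le> ((hi_idx J k n - lo_idx J k) choose (k - lo_idx J k)) * card (chains_of_flats E indep J)"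
proof -
  let ?c = "(hi_idx J k n - lo_idx J k) choose (k - lo_idx J k)"
  have "\<forall>H\<in>chains_of_flats E indep J. card (TT J k H) \<le> ?c"
  proof
    fix H assume H: "H \<in> chains_of_flats E indep J"
    have BE: "hiS J k H \<subseteq> E" using flat_subE[OF flat_hi[OF fJ H]] .
    have AB: "loS J k H \<subseteq> hiS J k H" using lo_hi[OF fJ H] .
    have AE: "loS J k H \<subseteq> E" using AB BE by blast
    have cA: "card (loS J k H) = lo_idx J k" using rank_lo[OF fJ H] rc[OF AE] by simp
    have cB: "card (hiS J k H) = hi_idx J k n" using rank_hi[OF fJ H rE] rc[OF BE] by simp
    have "TT J k H \<subseteq> {F. F \<subseteq> hiS J k H \<and> loS J k H \<subseteq> F \<and> card F = k}"
    proof
      fix F assume "F \<in> TT J k H"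
      then have F: "flat E indep F" "mrank indep F = k" "loS J k H \<subseteq> F" "F \<subseteq> hiS J k H"
        by (auto simp: TT_def)
      have "card F = k" using rc[OF flat_subE[OF F(1)]] F(2) by simp
      then show "F \<in> {F. F \<subseteq> hiS J k H \<and> loS J k H \<subseteq> F \<and> card F = k}" using F by blast
    qed
    moreover have "finite {F. F \<subseteq> hiS J k H \<and> loS J k H \<subseteq> F \<and> card F = k}"
      using finite_subset[OF BE finE] by simp
    ultimately have "card (TT J k H) \<le> card {F. F \<subseteq> hiS J k H \<and> loS J k H \<subseteq> F \<and> card F = k}"
      by (rule card_mono[rotated])
    also have "\<dots> \<le> ?c"
      by (rule count_upper_card[OF AB finite_subset[OF BE finE] cA cB])
    finally show "card (TT J k H) \<le> ?c" .
  qed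
  then have "(\<Sum>H\<in>chains_of_flats E indep J. card (TT J k H)) \<le> (\<Sum>H\<in>chains_of_flats E indep J. ?c)"
    by (intro sum_mono) blast
  then show ?thesis using card_ins[OF fJ kJ] by (simp add: mult.commute)
qed

lemma chains_empty: "chains_of_flats E indep {} = {\<lambda>_. {}}"
  unfolding chains_of_flats_def by auto

end

lemma bool_mat: "matroid {0..d} (\<lambda>I. I \<subseteq> {0..(d::nat)})"
  unfolding matroid_def
proof (intro conjI allI impI)
  fix I J :: "nat set" assume h: "I \<subseteq> {0..d} \<and> J \<subseteq> {0..d} \<and> card I < card J"
  have "\<not> J \<subseteq> I"
  proof
    assume "J \<subseteq> I"
    then have "card J \<le> card I" using h finite_subset[of I "{0..d}"] by (intro card_mono) auto
    then show False using h by simp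
  qed
  then obtain x where "x \<in> J - I" by blast
  then show "\<exists>x\<in>J - I. insert x I \<subseteq> {0..d}" using h by blast
qed auto

lemma bmat: "mat {0..d} (\<lambda>I. I \<subseteq> {0..(d::nat)})"
  by (rule mat.intro[OF bool_mat])

lemma bool_rank:
  assumes X: "X \<subseteq> {0..(d::nat)}"
  shows "mrank (\<lambda>I. I \<subseteq> {0..d}) X = card X"
proof -
  have fX: "finite X" using finite_subset[OF X] by simp
  have "card X \<le> mrank (\<lambda>I. I \<subseteq> {0..d}) X" using mat.rank_ge[OF bmat, where I=X and X=X] X by simp
  moreover obtain I where "I \<subseteq> X" "card I = mrank (\<lambda>I. I \<subseteq> {0..d}) X"
    using mat.rank_ex[OF bmat, where X=X] by blast
  then have "mrank (\<lambda>I. I \<subseteq> {0..d}) X \<le> card X" using card_mono[OF fX] by metis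
  ultimately show ?thesis by simp
qed

lemma choose_pos:
  assumes "finite J" "0 < k" "k < n"
  shows "0 < (hi_idx J k n - lo_idx J k) choose (k - lo_idx J k)"
  using lo_idx_less[OF assms(1,2)] hi_idx_gt[OF assms(1,3)] by (simp add: zero_less_binomial_iff)

lemma U_pos:
  assumes "finite J" "J \<subseteq> {1..d}"
  shows "0 < U_flag d J"
  using assms
proof (induction J rule: finite_induct)
  case empty
  then show ?case by (simp add: U_flag_def N_flag_def mat.chains_empty[OF bmat])
next
  case (insert k J)
  have rE: "mrank (\<lambda>I. I \<subseteq> {0..d}) {0..d} = d + 1" using bool_rank[of "{0..d}" d] by simp
  have k: "0 < k" "k < d + 1" using insert.prems by auto
  have "0 < ((hi_idx J k (d+1) - lo_idx J k) choose (k - lo_idx J k)) * U_flag d J"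
    using choose_pos[OF insert.hyps(1) k] insert.IH insert.prems by simp
  also have "\<dots> \<le> U_flag d (insert k J)"
    unfolding U_flag_def N_flag_def
    by (rule mat.step_lower[OF bmat insert.hyps(1,2) k rE])
  finally show ?case .
qed

lemma one_step:
  assumes M: "matroid E indep" and rE: "mrank indep E = d + 1"
    and fJ: "finite J" and J: "J \<subseteq> {1..d}" and k: "k \<in> {1..d}" and kJ: "k \<notin> J"
  shows "real (N_flag E indep J) / real (U_flag d J)
           \<le> real (N_flag E indep (insert k J)) / real (U_flag d (insert k J))"
proof -
  let ?c = "(hi_idx J k (d+1) - lo_idx J k) choose (k - lo_idx J k)"
  have k': "0 < k" "k < d + 1" using k by auto
  have rB: "mrank (\<lambda>I. I \<subseteq> {0..d}) {0..d} = d + 1" using bool_rank[of "{0..d}" d] by simp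
  have N: "?c * N_flag E indep J \<le> N_flag E indep (insert k J)"
    unfolding N_flag_def by (rule mat.step_lower[OF mat.intro[OF M] fJ kJ k' rE])
  have U: "U_flag d (insert k J) \<le> ?c * U_flag d J"
    unfolding U_flag_def N_flag_def
    by (rule mat.step_upper[OF bmat bool_rank fJ kJ rB])
  have U0: "0 < U_flag d J" using U_pos[OF fJ J] .
  have U1: "0 < U_flag d (insert k J)" using U_pos[of "insert k J" d] fJ J k by simp
  have "N_flag E indep J * U_flag d (insert k J) \<le> N_flag E indep J * (?c * U_flag d J)"
    using U by simp
  also have "\<dots> = (?c * N_flag E indep J) * U_flag d J" by simp
  also have "\<dots> \<le> N_flag E indep (insert k J) * U_flag d J" using N by simp
  finally have "real (N_flag E indep J) * real (U_flag d (insert k J))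
      \<le> real (N_flag E indep (insert k J)) * real (U_flag d J)"
    by (metis of_nat_le_iff of_nat_mult)
  then show ?thesis using U0 U1 by (simp add: divide_simps)
qed

lemma main_ind:
  assumes M: "matroid E indep" and rE: "mrank indep E = d + 1" and fD: "finite D"
  shows "\<forall>J. finite J \<longrightarrow> J \<inter> D = {} \<longrightarrow> J \<union> D \<subseteq> {1..d} \<longrightarrow>
      real (N_flag E indep J) / real (U_flag d J) \<le> real (N_flag E indep (J \<union> D)) / real (U_flag d (J \<union> D))"
  using fD
proof (induction D rule: finite_induct)
  case empty then show ?case by simp
next
  case (insert k D)
  show ?case
  proof (intro allI impI)
    fix J assume fJ: "finite J" and dis: "J \<inter> insert k D = {}" and sub: "J \<union> insert k D \<subseteq> {1..d}"
    have "real (N_flag E indep J) / real (U_flag d J) \<le> real (N_flag E indep (J \<union> D)) / real (U_flag d (J \<union> D))"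
      using insert.IH fJ dis sub by blast
    also have "\<dots> \<le> real (N_flag E indep (insert k (J \<union> D))) / real (U_flag d (insert k (J \<union> D)))"
      by (rule one_step[OF M rE]) (use fJ insert.hyps dis sub in auto)
    also have "insert k (J \<union> D) = J \<union> insert k D" by blast
    finally show "real (N_flag E indep J) / real (U_flag d J)
        \<le> real (N_flag E indep (J \<union> insert k D)) / real (U_flag d (J \<union> insert k D))" .
  qed
qed

theorem lemma3p29:
  fixes E :: "'a set" and indep :: "'a set \<Rightarrow> bool" and d :: nat and J J' :: "nat set"
  assumes "matroid E indep" and "loopless E indep" and "mrank indep E = d + 1"
    and "J \<subseteq> J'" and "J' \<subseteq> {1..d}"
  shows "real (N_flag E indep J) / real (U_flag d J)
           \<le> real (N_flag E indep J') / real (U_flag d J')"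
proof -
  have fJ': "finite J'" using finite_subset[OF assms(5)] by simp
  have fJ: "finite J" using finite_subset[OF assms(4) fJ'] .
  have fD: "finite (J' - J)" using fJ' by simp
  have eq: "J \<union> (J' - J) = J'" using assms(4) by blast
  have dis: "J \<inter> (J' - J) = {}" by blast
  have sub: "J \<union> (J' - J) \<subseteq> {1..d}" using eq assms(5) by simp
  have "real (N_flag E indep J) / real (U_flag d J)
      \<le> real (N_flag E indep (J \<union> (J' - J))) / real (U_flag d (J \<union> (J' - J)))"
    using main_ind[OF assms(1,3) fD] fJ dis sub by blast
  then show ?thesis unfolding eq .
qed

end
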